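(* For all integers $m\ge 2$ and $n\ge 1$, $p(m,n)<n!/2$.
   Context: For integers $m\ge 2$, $n\ge 1$, a valid $(m,n)$-sequence is a sequence $(a_1,\dots,a_{mn})$ with entries in $\{1,\dots,n\}$ in which each $k\in\{1,\dots,n\}$ occurs exactly $m$ times, and such that any two consecutive occurrences of $k$ are separated by exactly $k$ other terms; equivalently, there is an index $\theta_k$ such that $k$ occurs exactly at the positions $\theta_k,\ \theta_k+(k+1),\ \dots,\theta_k+(m-1)(k+1)$ (all in $\{1,\dots,mn\}$). The reversal of a valid sequence is again valid; $p(m,n)$ denotes the number of valid $(m,n)$-sequences counted up to reversal (i.e. the number of equivalence classes of valid sequences under identifying a sequence with its reversal). *)

theory Defs
  imports Complex_Main
begin

text \<open>Sequences (a_1,...,a_{mn}) are lists; the term a_i is xs ! (i - 1).\<close>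

definition valid_seq :: "nat \<Rightarrow> nat \<Rightarrow> nat list \<Rightarrow> bool" where
  "valid_seq m n xs \<longleftrightarrow>
     length xs = m * n \<and> set xs \<subseteq> {1..n} \<and>
     (\<forall>k\<in>{1..n}. \<exists>\<theta>::nat.
        (\<forall>j<m. \<theta> + j * (k + 1) \<in> {1..m * n}) \<and>
        {i \<in> {1..m * n}. xs ! (i - 1) = k} = {\<theta> + j * (k + 1) | j. j < m})"

definition p_count :: "nat \<Rightarrow> nat \<Rightarrow> nat" where
  "p_count m n = card ((\<lambda>xs. {xs, rev xs}) ` {xs. valid_seq m n xs})"

end

theory Submission
  imports Defs "HOL-Combinatorics.Multiset_Permutations"
begin

fun dd :: "nat list \<Rightarrow> nat list" where
  "dd [] = []"
| "dd (x # xs) = x # dd (filter (\<lambda>y. y \<noteq> x) xs)"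

lemma dd_set [simp]: "set (dd xs) = set xs"
  by (induction xs rule: dd.induct) auto

lemma dd_distinct: "distinct (dd xs)"
  by (induction xs rule: dd.induct) auto

lemma dd_append: "dd (us @ vs) = dd us @ dd (filter (\<lambda>y. y \<notin> set us) vs)"
proof (induction us arbitrary: vs rule: dd.induct)
  case 1
  then show ?case by simp
next
  case (2 x xs)
  have "dd ((x # xs) @ vs) = x # dd (filter (\<lambda>y. y \<noteq> x) xs @ filter (\<lambda>y. y \<noteq> x) vs)"
    by simp
  also have "\<dots> = x # dd (filter (\<lambda>y. y \<noteq> x) xs) @
      dd (filter (\<lambda>y. y \<notin> set (filter (\<lambda>y. y \<noteq> x) xs)) (filter (\<lambda>y. y \<noteq> x) vs))"
    using 2 by simp
  also have "filter (\<lambda>y. y \<notin> set (filter (\<lambda>y. y \<noteq> x) xs)) (filter (\<lambda>y. y \<noteq> x) vs)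
      = filter (\<lambda>y. y \<notin> set (x # xs)) vs"
    by (induction vs) auto
  finally show ?case by simp
qed

lemma valid_occ:
  assumes "valid_seq m n xs" "k \<in> {1..n}" "m \<ge> 1"
  shows "\<exists>\<theta>. \<theta> \<ge> 1 \<and> \<theta> + (m-1)*(k+1) \<le> m*n \<and>
     (\<forall>i<m*n. xs!i = k \<longleftrightarrow> (\<exists>j<m. Suc i = \<theta> + j*(k+1)))"
proof -
  obtain \<theta> where t1: "\<forall>j<m. \<theta> + j * (k + 1) \<in> {1..m * n}"
    and t2: "{i \<in> {1..m * n}. xs ! (i - 1) = k} = {\<theta> + j * (k + 1) | j. j < m}"
    using assms unfolding valid_seq_def by blast
  have a: "\<theta> \<ge> 1" using t1[rule_format, of 0] assms(3) by auto
  have b: "\<theta> + (m-1)*(k+1) \<le> m*n" using t1[rule_format, of "m-1"] assms(3) by auto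
  have c: "xs!i = k \<longleftrightarrow> (\<exists>j<m. Suc i = \<theta> + j*(k+1))" if "i < m*n" for i
  proof -
    have "xs!i = k \<longleftrightarrow> Suc i \<in> {i \<in> {1..m * n}. xs ! (i - 1) = k}" using that by auto
    also have "\<dots> \<longleftrightarrow> (\<exists>j<m. Suc i = \<theta> + j*(k+1))" unfolding t2 by auto
    finally show ?thesis .
  qed
  show ?thesis using a b c by blast
qed

lemma valid_set: "valid_seq m n xs \<Longrightarrow> set xs \<subseteq> {1..n}"
  unfolding valid_seq_def by blast

lemma valid_len: "valid_seq m n xs \<Longrightarrow> length xs = m*n"
  unfolding valid_seq_def by blast

lemma occ_first:
  assumes t1: "t \<ge> 1" and t2: "t + (m-1)*(a+1) \<le> m*n" and m: "m \<ge> 1"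
     and t3: "\<forall>q<m*n. xs!q = a \<longleftrightarrow> (\<exists>j<m. Suc q = t + j*(a+1))"
  shows "t - 1 < m*n" "xs!(t-1) = a" "\<And>q. q < m*n \<Longrightarrow> xs!q = a \<Longrightarrow> t \<le> Suc q"
proof -
  show tl: "t - 1 < m*n" using t1 t2 by linarith
  have "Suc (t-1) = t + 0*(a+1)" using t1 by simp
  then show "xs!(t-1) = a" using t3 tl m by auto
  fix q assume "q < m*n" "xs!q = a"
  then show "t \<le> Suc q" using t3 by auto
qed

lemma step_lemma:
  assumes vx: "valid_seq m n xs" and vy: "valid_seq m n ys" and m: "m \<ge> 1"
    and i: "i < m*n" and tk: "take i xs = take i ys" and ai: "xs!i \<in> set (take i xs)"
  shows "ys!i = xs!i"
proof -
  define a where "a = xs!i"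
  have lx: "length xs = m*n" and ly: "length ys = m*n" using vx vy valid_len by auto
  have ha: "a \<in> {1..n}" using valid_set[OF vx] i lx unfolding a_def
    by (metis nth_mem subsetD)
  have hx: "xs!q = ys!q" if "q < i" for q
    using tk that by (metis nth_take)
  obtain p where p: "p < i" "xs!p = a"
    using ai unfolding a_def by (auto simp: in_set_conv_nth)
  have yp: "ys!p = a" using hx p by metis
  have pm: "p < m*n" using p i by simp
  obtain t where t1: "t \<ge> 1" and t2: "t + (m-1)*(a+1) \<le> m*n"
     and t3: "\<forall>q<m*n. xs!q = a \<longleftrightarrow> (\<exists>j<m. Suc q = t + j*(a+1))"
    using valid_occ[OF vx ha m] by blast
  obtain s where s1: "s \<ge> 1" and s2: "s + (m-1)*(a+1) \<le> m*n"
     and s3: "\<forall>q<m*n. ys!q = a \<longleftrightarrow> (\<exists>j<m. Suc q = s + j*(a+1))"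
    using valid_occ[OF vy ha m] by blast
  note T = occ_first[OF t1 t2 m t3] and S = occ_first[OF s1 s2 m s3]
  have tp: "t \<le> Suc p" using T(3)[OF pm p(2)] .
  have sp: "s \<le> Suc p" using S(3)[OF pm yp] .
  have "ys!(t-1) = a" using hx[of "t-1"] T(2) tp p t1 by auto
  then have "s \<le> t" using S(3)[OF T(1)] t1 by simp
  have "xs!(s-1) = a" using hx[of "s-1"] S(2) sp p s1 by auto
  then have "t \<le> s" using T(3)[OF S(1)] s1 by simp
  have "t = s" using \<open>s \<le> t\<close> \<open>t \<le> s\<close> by simp
  then show ?thesis using t3 s3 i unfolding a_def by metis
qed
lemma dd_split:
  assumes "i < length xs" "xs!i \<notin> set (take i xs)"
  shows "\<exists>r. dd xs = dd (take i xs) @ xs!i # r"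
proof -
  have "xs = take i xs @ xs!i # drop (Suc i) xs" using assms(1) by (simp add: id_take_nth_drop)
  then have "dd xs = dd (take i xs) @ dd (filter (\<lambda>y. y \<notin> set (take i xs)) (xs!i # drop (Suc i) xs))"
    by (metis dd_append)
  then show ?thesis using assms(2) by simp
qed

lemma dd_inj:
  assumes vx: "valid_seq m n xs" and vy: "valid_seq m n ys" and m: "m \<ge> 1"
    and d: "dd xs = dd ys"
  shows "xs = ys"
proof -
  have lx: "length xs = m*n" and ly: "length ys = m*n" using vx vy valid_len by auto
  have "\<forall>i. i \<le> m*n \<longrightarrow> take i xs = take i ys"
  proof
    fix i show "i \<le> m*n \<longrightarrow> take i xs = take i ys"
    proof (induction i)
      case 0 then show ?case by simp
    next
      case (Suc i)
      show ?case
      proof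
        assume si: "Suc i \<le> m*n"
        then have i: "i < m*n" by simp
        have tk: "take i xs = take i ys" using Suc si by simp
        have "xs!i = ys!i"
        proof (cases "xs!i \<in> set (take i xs)")
          case True then show ?thesis using step_lemma[OF vx vy m i tk] by simp
        next
          case F1: False
          show ?thesis
          proof (cases "ys!i \<in> set (take i ys)")
            case True then show ?thesis using step_lemma[OF vy vx m i tk[symmetric]] by simp
          next
            case False
            obtain r where r: "dd xs = dd (take i xs) @ xs!i # r" using dd_split[OF _ F1] i lx by auto
            obtain r' where r': "dd ys = dd (take i ys) @ ys!i # r'" using dd_split[OF _ False] i ly by auto
            show ?thesis using r r' d tk by simp
          qed
        qed
        then show "take (Suc i) xs = take (Suc i) ys" using tk i lx ly
          by (simp add: take_Suc_conv_app_nth)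
      qed
    qed
  qed
  then show ?thesis using lx ly by (metis order_refl take_all)
qed
lemma valid_seteq:
  assumes vx: "valid_seq m n xs" and m: "m \<ge> 1"
  shows "set xs = {1..n}"
proof
  show "set xs \<subseteq> {1..n}" using valid_set[OF vx] .
  show "{1..n} \<subseteq> set xs"
  proof
    fix k assume k: "k \<in> {1..n}"
    obtain t where t1: "t \<ge> 1" and t2: "t + (m-1)*(k+1) \<le> m*n"
       and t3: "\<forall>q<m*n. xs!q = k \<longleftrightarrow> (\<exists>j<m. Suc q = t + j*(k+1))"
      using valid_occ[OF vx k m] by blast
    note T = occ_first[OF t1 t2 m t3]
    show "k \<in> set xs" using T(1,2) valid_len[OF vx] by (metis nth_mem)
  qed
qed

lemma dd_not_id:
  assumes vx: "valid_seq m n xs" and m: "m \<ge> 2" and n: "n \<ge> 1"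
  shows "dd xs \<noteq> [1..<Suc n]"
proof
  assume eq: "dd xs = [1..<Suc n]"
  have m1: "m \<ge> 1" using m by simp
  have k: "n \<in> {1..n}" using n by simp
  obtain t where t1: "t \<ge> 1" and t2: "t + (m-1)*(n+1) \<le> m*n"
     and t3: "\<forall>q<m*n. xs!q = n \<longleftrightarrow> (\<exists>j<m. Suc q = t + j*(n+1))"
    using valid_occ[OF vx k m1] by blast
  note T = occ_first[OF t1 t2 m1 t3]
  have ar: "m*n + 1 \<le> (m-1)*(n+1) + n"
  proof -
    obtain m' where "m = m' + 2" using m by (metis le_add_diff_inverse2)
    then show ?thesis by (simp add: algebra_simps)
  qed
  have tn: "t < n" using t2 ar by linarith
  define T where "T = take t xs"
  have tl: "t \<le> length xs" using T(1) t1 valid_len[OF vx] by simp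
  have lT: "length T = t" using tl unfolding T_def by simp
  have "T ! (t-1) = n" using T(2) t1 unfolding T_def by simp
  then have nT: "n \<in> set T" using lT t1 by (metis One_nat_def Suc_le_eq diff_Suc_less nth_mem)
  have "dd xs = dd T @ dd (filter (\<lambda>y. y \<notin> set T) (drop t xs))"
    unfolding T_def using dd_append[of "take t xs" "drop t xs"] by simp
  with eq have pre: "take (length (dd T)) [1..<Suc n] = dd T" by (metis append_eq_conv_conj)
  have "length (dd T) = card (set T)" using dd_distinct[of T] using distinct_card by fastforce
  also have "\<dots> \<le> length T" by (rule card_length)
  also have "\<dots> \<le> t" unfolding T_def by simp
  finally have L: "length (dd T) < n" using tn by simp
  have "dd T = [1..<1 + length (dd T)]" using pre L by (simp add: take_upt)
  then have "n \<in> set [1..<1 + length (dd T)]" using nT dd_set by metis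
  then show False using L by simp
qed
lemma rev_valid:
  assumes vx: "valid_seq m n xs" and m: "m \<ge> 1"
  shows "valid_seq m n (rev xs)"
proof -
  have lx: "length xs = m*n" using valid_len[OF vx] .
  define N where "N = m*n"
  have "\<exists>\<theta>::nat. (\<forall>j<m. \<theta> + j * (k + 1) \<in> {1..m * n}) \<and>
        {i \<in> {1..m * n}. rev xs ! (i - 1) = k} = {\<theta> + j * (k + 1) | j. j < m}"
    if k: "k \<in> {1..n}" for k
  proof -
    obtain t where t1: "t \<ge> 1" and t2: "t + (m-1)*(k+1) \<le> m*n"
       and t3: "\<forall>q<m*n. xs!q = k \<longleftrightarrow> (\<exists>j<m. Suc q = t + j*(k+1))"
      using valid_occ[OF vx k m] by blast
    define B where "B = (m-1)*(k+1)"
    define th where "th = N + 1 - (t + B)"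
    have tB: "t + B \<le> N" using t2 unfolding B_def N_def .
    have r1: "\<forall>j<m. th + j * (k + 1) \<in> {1..m * n}"
    proof (intro allI impI)
      fix j assume "j < m"
      then have "j * (k+1) \<le> B" unfolding B_def by (intro mult_le_mono1) simp
      then show "th + j * (k + 1) \<in> {1..m * n}" using tB t1 unfolding th_def N_def by auto
    qed
    have r2: "{i \<in> {1..m * n}. rev xs ! (i - 1) = k} = {th + j * (k + 1) | j. j < m}"
    proof (intro set_eqI iffI)
      fix i assume "i \<in> {i \<in> {1..m * n}. rev xs ! (i - 1) = k}"
      then have i1: "1 \<le> i" "i \<le> N" and ik: "rev xs ! (i-1) = k" unfolding N_def by auto
      have "xs ! (N - i) = k" using ik i1 lx rev_nth[of "i-1" xs] unfolding N_def by simp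
      then obtain j where j: "j < m" "Suc (N - i) = t + j*(k+1)" using t3 i1 unfolding N_def by auto
      define A where "A = j*(k+1)"
      have AB: "A \<le> B" unfolding A_def B_def using j by (intro mult_le_mono1) simp
      have "(m-1-j)*(k+1) = B - A" unfolding A_def B_def by (rule diff_mult_distrib)
      moreover have "i = th + (B - A)" using j(2) AB tB i1 unfolding th_def A_def[symmetric] by linarith
      ultimately have "i = th + (m-1-j)*(k+1)" by simp
      moreover have "m-1-j < m" using j by simp
      ultimately show "i \<in> {th + j * (k + 1) | j. j < m}" by blast
    next
      fix i assume "i \<in> {th + j * (k + 1) | j. j < m}"
      then obtain j' where j': "j' < m" "i = th + j'*(k+1)" by auto
      have iN: "i \<in> {1..m*n}" using r1 j' by auto
      define A where "A = j'*(k+1)"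
      have AB: "A \<le> B" unfolding A_def B_def using j' by (intro mult_le_mono1) simp
      have "(m-1-j')*(k+1) = B - A" unfolding A_def B_def by (rule diff_mult_distrib)
      moreover have "Suc (N - i) = t + (B - A)" using j'(2) AB tB t1 unfolding th_def A_def[symmetric] by linarith
      ultimately have e: "Suc (N - i) = t + (m-1-j')*(k+1)" by simp
      have "m-1-j' < m" using m by simp
      then have "xs ! (N - i) = k" using t3 e iN unfolding N_def by force
      moreover have "i - 1 < m*n" using iN by auto
      ultimately have "rev xs ! (i-1) = k" using iN lx rev_nth[of "i-1" xs] unfolding N_def by simp
      then show "i \<in> {i \<in> {1..m * n}. rev xs ! (i - 1) = k}" using iN by simp
    qed
    show ?thesis using r1 r2 by blast
  qed
  moreover have "length (rev xs) = m*n" using lx by simp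
  moreover have "set (rev xs) \<subseteq> {1..n}" using valid_set[OF vx] by simp
  ultimately show ?thesis unfolding valid_seq_def by blast
qed

lemma pal_eq:
  assumes vx: "valid_seq m n xs" and m: "m \<ge> 1" and pal: "rev xs = xs"
    and k: "k \<in> {1..n}"
  shows "\<exists>t. t \<ge> 1 \<and> t + (m-1)*(k+1) \<le> m*n \<and>
     (\<forall>q<m*n. xs!q = k \<longleftrightarrow> (\<exists>j<m. Suc q = t + j*(k+1))) \<and> m*n + 1 = 2*t + (m-1)*(k+1)"
proof -
  have lx: "length xs = m*n" using valid_len[OF vx] .
  obtain t where t1: "t \<ge> 1" and t2: "t + (m-1)*(k+1) \<le> m*n"
     and t3: "\<forall>q<m*n. xs!q = k \<longleftrightarrow> (\<exists>j<m. Suc q = t + j*(k+1))"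
    using valid_occ[OF vx k m] by blast
  note T = occ_first[OF t1 t2 m t3]
  define M where "M = t + (m-1)*(k+1)"
  have "Suc (M - 1) = t + (m-1)*(k+1)" using t1 unfolding M_def by simp
  moreover have "M - 1 < m*n" using t2 t1 unfolding M_def by linarith
  ultimately have xM: "xs!(M-1) = k"
  proof -
    assume e: "Suc (M - 1) = t + (m-1)*(k+1)" and l: "M - 1 < m*n"
    have "\<exists>j<m. Suc (M-1) = t + j*(k+1)" using e m by (intro exI[of _ "m-1"]) auto
    then show ?thesis using t3 l by blast
  qed
  have MN: "M - 1 < m*n" using t2 t1 unfolding M_def by linarith
  have "rev xs ! (t-1) = xs ! (m*n - t)" using rev_nth[of "t-1" xs] T(1) lx t1 by simp
  then have "xs ! (m*n - t) = k" using pal T(2) by simp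
  moreover have "m*n - t < m*n" using t1 T(1) by simp
  ultimately obtain j where j: "j < m" "Suc (m*n - t) = t + j*(k+1)" using t3 by blast
  have "j*(k+1) \<le> (m-1)*(k+1)" using j by (intro mult_le_mono1) simp
  then have a: "m*n + 1 - t \<le> M" using j t1 t2 unfolding M_def by linarith
  have "rev xs ! (M-1) = xs ! (m*n - M)" using rev_nth[of "M-1" xs] MN lx t1 unfolding M_def by simp
  then have "xs ! (m*n - M) = k" using pal xM by simp
  moreover have "m*n - M < m*n" using t1 T(1) unfolding M_def by simp
  ultimately obtain j2 where j2: "j2 < m" "Suc (m*n - M) = t + j2*(k+1)" using t3 by blast
  then have b: "m*n + 1 - M \<ge> t" using t2 unfolding M_def by linarith
  have "m*n + 1 = 2*t + (m-1)*(k+1)" using a b t2 unfolding M_def by linarith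
  then show ?thesis using t1 t2 t3 by blast
qed

lemma no_pal:
  assumes vx: "valid_seq m n xs" and m: "m \<ge> 1" and n: "n \<ge> 2"
  shows "rev xs \<noteq> xs"
proof
  assume pal: "rev xs = xs"
  obtain t1 where a1: "t1 \<ge> 1" and a2: "t1 + (m-1)*(1+1) \<le> m*n"
    and a3: "\<forall>q<m*n. xs!q = 1 \<longleftrightarrow> (\<exists>j<m. Suc q = t1 + j*(1+1))"
    and a4: "m*n + 1 = 2*t1 + (m-1)*(1+1)"
    using pal_eq[OF vx m pal, of 1] n by auto
  obtain t2 where b1: "t2 \<ge> 1" and b2: "t2 + (m-1)*(2+1) \<le> m*n"
    and b3: "\<forall>q<m*n. xs!q = 2 \<longleftrightarrow> (\<exists>j<m. Suc q = t2 + j*(2+1))"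
    and b4: "m*n + 1 = 2*t2 + (m-1)*(2+1)"
    using pal_eq[OF vx m pal, of 2] n by auto
  have e1: "(m-1)*(1+1) = 2*(m-1)" and e2: "(m-1)*(2+1) = 3*(m-1)" by simp_all
  note a4 = a4[unfolded e1] and b4 = b4[unfolded e2] and a2 = a2[unfolded e1]
  define h where "h = t1 - t2"
  have mh: "m - 1 = 2*h" using a4 b4 unfolding h_def by linarith
  define c where "c = t1 + h*2 - 1"
  have hm: "h < m" using mh m by linarith
  have cN: "c < m*n" using a2 mh a1 unfolding c_def by linarith
  have "Suc c = t1 + h*(1+1)" using a1 unfolding c_def by simp
  then have "xs!c = 1" using a3 cN hm by blast
  moreover have "Suc c = t2 + h*(2+1)"
  proof -
    have "t1 = t2 + h" using a4 b4 mh unfolding h_def by linarith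
    moreover have "Suc c = t1 + 2*h" using a1 unfolding c_def by simp
    ultimately show ?thesis by simp
  qed
  then have "xs!c = 2" using b3 cN hm by blast
  ultimately show False by simp
qed

theorem proposition3:
  fixes m n :: nat
  assumes "m \<ge> 2" and "n \<ge> 1"
  shows "real (p_count m n) < real (fact n) / 2"
proof -
  have m1: "m \<ge> 1" using assms by simp
  define V where "V = {xs. valid_seq m n xs}"
  define P where "P = permutations_of_set {1..n::nat}"
  define C where "C = (\<lambda>xs. {xs, rev xs}) ` V"
  have inj: "inj_on dd V" unfolding V_def using dd_inj m1 by (intro inj_onI) blast
  have sub: "dd ` V \<subseteq> P - {[1..<Suc n]}"
    unfolding V_def P_def using valid_seteq dd_not_id assms m1 dd_distinct
    by (auto intro!: permutations_of_setI)
  have idP: "[1..<Suc n] \<in> P" unfolding P_def by (auto intro!: permutations_of_setI)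
  have fP: "finite P" unfolding P_def by simp
  have cP: "card P = fact n" unfolding P_def by simp
  have fV: "finite V" using inj sub fP by (meson finite_Diff finite_imageD finite_subset)
  have "card V = card (dd ` V)" using inj by (simp add: card_image)
  also have "\<dots> \<le> card (P - {[1..<Suc n]})" using sub fP by (intro card_mono) auto
  also have "\<dots> = fact n - 1" using idP fP cP by simp
  finally have cV: "card V < fact n" using fact_ge_1[of n, where 'a=nat] by linarith
  have np: "xs \<noteq> rev xs" if "xs \<in> V" for xs
  proof (cases "n \<ge> 2")
    case True then show ?thesis using no_pal[of m n xs] that m1 unfolding V_def by auto
  next
    case False
    then have "n = 1" using assms by simp
    then have "card V = 0" using cV by simp
    then show ?thesis using fV that by auto
  qed
  have UC: "\<Union>C = V" unfolding C_def V_def using rev_valid m1 by auto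
  have "2 * card C = card (\<Union>C)"
  proof (rule card_partition)
    show "finite C" unfolding C_def using fV by simp
    show "finite (\<Union>C)" using UC fV by simp
    show "\<And>c. c \<in> C \<Longrightarrow> card c = 2" unfolding C_def using np by auto
    show "\<And>c1 c2. c1 \<in> C \<Longrightarrow> c2 \<in> C \<Longrightarrow> c1 \<noteq> c2 \<Longrightarrow> c1 \<inter> c2 = {}" unfolding C_def by auto
  qed
  then have "2 * card C < fact n" using UC cV by simp
  moreover have "p_count m n = card C" unfolding p_count_def C_def V_def by simp
  ultimately have "2 * real (p_count m n) < real (fact n)"
    by (metis of_nat_fact of_nat_less_iff of_nat_mult of_nat_numeral)
  then show ?thesis by simp
qed

end
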